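(* Let $D\ge1$, let $Q_D$ be the $D$-dimensional hypercube on $X=\{0,1\}^D$ with adjacency matrix $A$. The set $$\{I,\alpha_1,\ldots,\alpha_D\}\cup\{\alpha^*_iA\alpha^*_j-\alpha^*_jA\alpha^*_i\mid 1\le i<j\le D\}$$ is a basis for the space of $A$-like matrices of $Q_D$. In particular this space has dimension $1+D+\binom{D}{2}$.
   Context: $Q_D$ is the graph with vertex set $X=\{0,1\}^D$, two vertices adjacent iff they differ in exactly one coordinate. Matrices are real with rows and columns indexed by $X$; $I$ is the identity. A matrix $B$ is $A$-like if $BA=AB$ and $B_{xy}=0$ for all $x,y\in X$ that are neither equal nor adjacent. For $1\le i\le D$, $\alpha_i$ has $(x,y)$-entry $1$ if $x,y$ differ in the $i$-th coordinate and agree in all others, and $0$ otherwise; $\alpha^*_i$ is the diagonal matrix with $(x,x)$-entry $1$ if $x_i=0$ and $-1$ if $x_i=1$. *)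

theory Defs
  imports "HOL-Analysis.Analysis" "HOL-Library.Function_Algebras"
begin

text \<open>Vertices of Q_D: boolean lists of length D (False = 0, True = 1).
  Coordinate i (1-based, 1 \<le> i \<le> D) of x is x ! (i - 1).
  Real matrices indexed by X are functions bool list \<Rightarrow> bool list \<Rightarrow> real that
  vanish outside X \<times> X.\<close>

type_synonym hmat = "bool list \<Rightarrow> bool list \<Rightarrow> real"

definition hcX :: "nat \<Rightarrow> bool list set" where
  "hcX D = {x. length x = D}"

definition is_hmat :: "nat \<Rightarrow> hmat \<Rightarrow> bool" where
  "is_hmat D B \<longleftrightarrow> (\<forall>x y. x \<notin> hcX D \<or> y \<notin> hcX D \<longrightarrow> B x y = 0)"

definition hmult :: "nat \<Rightarrow> hmat \<Rightarrow> hmat \<Rightarrow> hmat" where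
  "hmult D B C = (\<lambda>x y. \<Sum>z\<in>hcX D. B x z * C z y)"

definition hscale :: "real \<Rightarrow> hmat \<Rightarrow> hmat" where
  "hscale c B = (\<lambda>x y. c * B x y)"

definition hc_adj :: "nat \<Rightarrow> bool list \<Rightarrow> bool list \<Rightarrow> bool" where
  "hc_adj D x y \<longleftrightarrow> x \<in> hcX D \<and> y \<in> hcX D \<and> card {k. k < D \<and> x ! k \<noteq> y ! k} = 1"

definition hcA :: "nat \<Rightarrow> hmat" where
  "hcA D = (\<lambda>x y. if hc_adj D x y then 1 else 0)"

definition hcI :: "nat \<Rightarrow> hmat" where
  "hcI D = (\<lambda>x y. if x \<in> hcX D \<and> x = y then 1 else 0)"

definition alpha :: "nat \<Rightarrow> nat \<Rightarrow> hmat" where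
  "alpha D i = (\<lambda>x y. if x \<in> hcX D \<and> y \<in> hcX D \<and> x ! (i - 1) \<noteq> y ! (i - 1)
                         \<and> (\<forall>k<D. k \<noteq> i - 1 \<longrightarrow> x ! k = y ! k) then 1 else 0)"

definition alpha_star :: "nat \<Rightarrow> nat \<Rightarrow> hmat" where
  "alpha_star D i = (\<lambda>x y. if x \<in> hcX D \<and> x = y then (if x ! (i - 1) then -1 else 1) else 0)"

definition A_like :: "nat \<Rightarrow> hmat \<Rightarrow> bool" where
  "A_like D B \<longleftrightarrow> is_hmat D B \<and> hmult D B (hcA D) = hmult D (hcA D) B
     \<and> (\<forall>x\<in>hcX D. \<forall>y\<in>hcX D. x \<noteq> y \<and> \<not> hc_adj D x y \<longrightarrow> B x y = 0)"

definition hbasis_set :: "nat \<Rightarrow> hmat set" where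
  "hbasis_set D = {hcI D} \<union> alpha D ` {1..D} \<union>
     {hmult D (hmult D (alpha_star D i) (hcA D)) (alpha_star D j)
      - hmult D (hmult D (alpha_star D j) (hcA D)) (alpha_star D i) | i j. 1 \<le> i \<and> i < j \<and> j \<le> D}"

end

theory Submission
  imports Defs
begin

lemma hsum_apply: "(\<Sum>q\<in>Q. (g q :: hmat)) x y = (\<Sum>q\<in>Q. g q x y)"
  by (induct Q rule: infinite_finite_induct) auto

interpretation hv: vector_space hscale
  by unfold_locales (auto simp: hscale_def fun_eq_iff algebra_simps)

definition flip :: "bool list \<Rightarrow> nat \<Rightarrow> bool list" where
  "flip x k = x[k := \<not> x ! k]"

definition dset :: "nat \<Rightarrow> bool list \<Rightarrow> bool list \<Rightarrow> nat set" where
  "dset D x y = {k. k < D \<and> x ! k \<noteq> y ! k}"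

lemma flip_X[simp]: "x \<in> hcX D \<Longrightarrow> flip x k \<in> hcX D"
  by (simp add: flip_def hcX_def)
lemma length_flip[simp]: "length (flip x k) = length x"
  by (simp add: flip_def)
lemma flip_nth: "j < length x \<Longrightarrow> flip x k ! j = (if j = k then \<not> x ! j else x ! j)"
  by (auto simp: flip_def nth_list_update)
lemma flip_flip[simp]: "flip (flip x k) k = x"
  by (cases "k < length x") (auto simp: flip_def list_update_beyond)
lemma flip_comm: "flip (flip x k) l = flip (flip x l) k"
  by (cases "k = l") (auto simp: flip_def nth_list_update list_update_swap)
lemma flip_inj: "k < length x \<Longrightarrow> l < length x \<Longrightarrow> flip x k = flip x l \<longleftrightarrow> k = l"
  by (metis flip_nth)
lemma flip_neq[simp]: "k < length x \<Longrightarrow> flip x k \<noteq> x"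
  by (metis flip_nth)
lemma flip_neq'[simp]: "k < length x \<Longrightarrow> x \<noteq> flip x k"
  by (metis flip_nth)

lemma X_len: "x \<in> hcX D \<longleftrightarrow> length x = D" by (simp add: hcX_def)

lemma dset_flip: "x \<in> hcX D \<Longrightarrow> w \<in> hcX D \<Longrightarrow> k < D \<Longrightarrow>
   dset D x (flip w k) = (dset D x w - {k}) \<union> ({k} - dset D x w)"
  by (auto simp: dset_def flip_nth X_len)
lemma dset_flip': "x \<in> hcX D \<Longrightarrow> w \<in> hcX D \<Longrightarrow> k < D \<Longrightarrow>
   dset D (flip x k) w = (dset D x w - {k}) \<union> ({k} - dset D x w)"
  by (auto simp: dset_def flip_nth X_len)
lemma dset_empty: "x \<in> hcX D \<Longrightarrow> y \<in> hcX D \<Longrightarrow> dset D x y = {} \<longleftrightarrow> x = y"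
  by (auto simp: dset_def X_len intro: nth_equalityI)
lemma dset_single: assumes "x \<in> hcX D" "y \<in> hcX D" "dset D x y = {m}" shows "y = flip x m"
proof (rule nth_equalityI)
  show "length y = length (flip x m)" using assms by (simp add: X_len)
  fix i assume "i < length y"
  then have "i < D" using assms by (simp add: X_len)
  then have "i = m \<longleftrightarrow> x ! i \<noteq> y ! i" using assms(3) by (auto simp: dset_def set_eq_iff)
  then show "y ! i = flip x m ! i" using \<open>i < D\<close> assms by (auto simp: flip_nth X_len)
qed
lemma dset_double: assumes "x \<in> hcX D" "y \<in> hcX D" "dset D x y = {m,n}" "m \<noteq> n" shows "y = flip (flip x m) n"
proof (rule nth_equalityI)
  show "length y = length (flip (flip x m) n)" using assms by (simp add: X_len)
  fix i assume "i < length y"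
  then have "i < D" using assms by (simp add: X_len)
  then have "(i = m \<or> i = n) \<longleftrightarrow> x ! i \<noteq> y ! i" using assms(3) by (auto simp: dset_def set_eq_iff)
  then show "y ! i = flip (flip x m) n ! i" using \<open>i < D\<close> assms by (auto simp: flip_nth X_len)
qed
lemma dset_sub: "dset D x y \<subseteq> {..<D}" by (auto simp: dset_def)
lemma dset_sym: "dset D x y = dset D y x" by (auto simp: dset_def)

lemma adj_iff: "hc_adj D x y \<longleftrightarrow> x \<in> hcX D \<and> y \<in> hcX D \<and> (\<exists>k<D. y = flip x k)"
proof
  assume a: "hc_adj D x y"
  then obtain m where m: "dset D x y = {m}" unfolding hc_adj_def dset_def[symmetric]
    by (auto simp: card_1_singleton_iff)
  then have "m < D" using dset_sub by blast
  with a m dset_single show "x \<in> hcX D \<and> y \<in> hcX D \<and> (\<exists>k<D. y = flip x k)"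
    by (auto simp: hc_adj_def)
next
  assume "x \<in> hcX D \<and> y \<in> hcX D \<and> (\<exists>k<D. y = flip x k)"
  then obtain k where "x \<in> hcX D" "y = flip x k" "k < D" by auto
  moreover then have "{k'. k' < D \<and> x ! k' \<noteq> y ! k'} = {k}" by (auto simp: flip_nth X_len split: if_splits)
  ultimately show "hc_adj D x y" by (simp add: hc_adj_def)
qed

lemma adj_sym: "hc_adj D x y \<longleftrightarrow> hc_adj D y x"
  unfolding hc_adj_def by (metis dset_def dset_sym)

lemma adj_set: "y \<in> hcX D \<Longrightarrow> {z \<in> hcX D. hc_adj D z y} = flip y ` {..<D}"
  by (auto simp: adj_iff adj_sym[of _ y] intro: rev_image_eqI)

lemma sumA_right: assumes "y \<in> hcX D"
  shows "(\<Sum>z\<in>hcX D. F z * hcA D z y) = (\<Sum>k<D. F (flip y k))"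
proof -
  have fin: "finite (hcX D)" unfolding hcX_def using finite_lists_length_eq[of "UNIV::bool set"] by simp
  have "(\<Sum>z\<in>hcX D. F z * hcA D z y) = (\<Sum>z\<in>{z \<in> hcX D. hc_adj D z y}. F z)"
    by (simp add: hcA_def sum.inter_filter[OF fin, symmetric] if_distrib cong: if_cong)
  also have "\<dots> = (\<Sum>k<D. F (flip y k))" unfolding adj_set[OF assms]
    by (rule sum.reindex_cong[where l="flip y"]) (use assms in \<open>auto simp: inj_on_def flip_inj X_len\<close>)
  finally show ?thesis .
qed

lemma sumA_left: assumes "x \<in> hcX D"
  shows "(\<Sum>z\<in>hcX D. hcA D x z * F z) = (\<Sum>k<D. F (flip x k))"
  using sumA_right[OF assms, of F] by (simp add: hcA_def adj_sym mult.commute)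

lemma finX: "finite (hcX D)" unfolding hcX_def using finite_lists_length_eq[of "UNIV::bool set"] by simp

definition supp :: "nat \<Rightarrow> hmat \<Rightarrow> bool" where
  "supp D B \<longleftrightarrow> is_hmat D B \<and> (\<forall>x\<in>hcX D. \<forall>y\<in>hcX D. x \<noteq> y \<and> \<not> hc_adj D x y \<longrightarrow> B x y = 0)"

lemma far_zero: assumes "supp D B" "x \<in> hcX D" "w \<in> hcX D" "card (dset D x w) \<ge> 2"
  shows "B x w = 0"
proof -
  have "x \<noteq> w" using assms dset_empty[of x D w] by auto
  moreover have "\<not> hc_adj D x w" using assms(4) by (auto simp: hc_adj_def dset_def)
  ultimately show ?thesis using assms(1-3) by (auto simp: supp_def)
qed

lemma hmult_right_A: "hmult D B (hcA D) x y = (if y \<in> hcX D then (\<Sum>k<D. B x (flip y k)) else 0)"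
proof (cases "y \<in> hcX D")
  case True then show ?thesis by (simp add: hmult_def sumA_right)
next
  case False then show ?thesis by (simp add: hmult_def hcA_def hc_adj_def)
qed
lemma hmult_left_A: "hmult D (hcA D) B x y = (if x \<in> hcX D then (\<Sum>k<D. B (flip x k) y) else 0)"
proof (cases "x \<in> hcX D")
  case True then show ?thesis by (simp add: hmult_def sumA_left)
next
  case False then show ?thesis by (simp add: hmult_def hcA_def hc_adj_def)
qed

lemma card2: "a \<noteq> b \<Longrightarrow> card {a,b} \<ge> 2" by simp
lemma card3: "a \<noteq> b \<Longrightarrow> c \<noteq> a \<Longrightarrow> c \<noteq> b \<Longrightarrow> card {a,b,c} \<ge> 2" by simp

lemma LR1: assumes "supp D B" "x \<in> hcX D" "m < D"
  shows "(\<Sum>k<D. B x (flip (flip x m) k)) = B x x"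
    "(\<Sum>k<D. B (flip x k) (flip x m)) = B (flip x m) (flip x m)"
proof -
  have z1: "B x (flip (flip x m) k) = 0" if "k < D" "k \<noteq> m" for k
  proof (rule far_zero[OF assms(1,2)])
    have "dset D x (flip (flip x m) k) = {m,k}" using assms that by (auto simp: dset_def flip_nth X_len split: if_splits)
    then show "card (dset D x (flip (flip x m) k)) \<ge> 2" using that by simp
  qed (use assms in auto)
  have z2: "B (flip x k) (flip x m) = 0" if "k < D" "k \<noteq> m" for k
  proof (rule far_zero[OF assms(1)])
    have "dset D (flip x k) (flip x m) = {m,k}" using assms that by (auto simp: dset_def flip_nth X_len split: if_splits)
    then show "card (dset D (flip x k) (flip x m)) \<ge> 2" using that by simp
  qed (use assms in auto)
  have "(\<Sum>k<D. B x (flip (flip x m) k)) = (\<Sum>k\<in>{m}. B x (flip (flip x m) k))"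
    by (rule sum.mono_neutral_right) (use assms z1 in auto)
  then show "(\<Sum>k<D. B x (flip (flip x m) k)) = B x x" by simp
  have "(\<Sum>k<D. B (flip x k) (flip x m)) = (\<Sum>k\<in>{m}. B (flip x k) (flip x m))"
    by (rule sum.mono_neutral_right) (use assms z2 in auto)
  then show "(\<Sum>k<D. B (flip x k) (flip x m)) = B (flip x m) (flip x m)" by simp
qed

lemma LR2: assumes "supp D B" "x \<in> hcX D" "m < D" "n < D" "m \<noteq> n"
  shows "(\<Sum>k<D. B x (flip (flip (flip x m) n) k)) = B x (flip x m) + B x (flip x n)"
    "(\<Sum>k<D. B (flip x k) (flip (flip x m) n)) =
       B (flip x m) (flip (flip x m) n) + B (flip x n) (flip (flip x n) m)"
proof -
  have z1: "B x (flip (flip (flip x m) n) k) = 0" if "k < D" "k \<noteq> m" "k \<noteq> n" for k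
  proof (rule far_zero[OF assms(1,2)])
    have "dset D x (flip (flip (flip x m) n) k) = {m,n,k}" using assms that by (auto simp: dset_def flip_nth X_len split: if_splits)
    then show "card (dset D x (flip (flip (flip x m) n) k)) \<ge> 2" using that assms by simp
  qed (use assms in auto)
  have z2: "B (flip x k) (flip (flip x m) n) = 0" if "k < D" "k \<noteq> m" "k \<noteq> n" for k
  proof (rule far_zero[OF assms(1)])
    have "dset D (flip x k) (flip (flip x m) n) = {m,n,k}" using assms that by (auto simp: dset_def flip_nth X_len split: if_splits)
    then show "card (dset D (flip x k) (flip (flip x m) n)) \<ge> 2" using that assms by simp
  qed (use assms in auto)
  have "(\<Sum>k<D. B x (flip (flip (flip x m) n) k)) = (\<Sum>k\<in>{m,n}. B x (flip (flip (flip x m) n) k))"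
    by (rule sum.mono_neutral_right) (use assms z1 in auto)
  then show "(\<Sum>k<D. B x (flip (flip (flip x m) n) k)) = B x (flip x m) + B x (flip x n)"
    using assms by (simp add: flip_comm[of "flip x m" n m])
  have "(\<Sum>k<D. B (flip x k) (flip (flip x m) n)) = (\<Sum>k\<in>{m,n}. B (flip x k) (flip (flip x m) n))"
    by (rule sum.mono_neutral_right) (use assms z2 in auto)
  then show "(\<Sum>k<D. B (flip x k) (flip (flip x m) n)) =
       B (flip x m) (flip (flip x m) n) + B (flip x n) (flip (flip x n) m)"
    using assms by (simp add: flip_comm[of x m n])
qed

lemma LR3: assumes "supp D B" "x \<in> hcX D" "y \<in> hcX D" "card (dset D x y) \<ge> 3"
  shows "(\<Sum>k<D. B x (flip y k)) = 0" "(\<Sum>k<D. B (flip x k) y) = 0"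
proof -
  have c: "card (dset D x y - {k} \<union> ({k} - dset D x y)) \<ge> 2" for k
  proof -
    have f: "finite (dset D x y)" by (rule finite_subset[OF dset_sub]) simp
    have "card (dset D x y) - card {k} \<le> card (dset D x y - {k})" by (rule diff_card_le_card_Diff) simp
    also have "\<dots> \<le> card (dset D x y - {k} \<union> ({k} - dset D x y))" by (rule card_mono) (use f in auto)
    finally show ?thesis using assms(4) by simp
  qed
  show "(\<Sum>k<D. B x (flip y k)) = 0"
  proof (rule sum.neutral, rule ballI)
    fix k assume "k \<in> {..<D}"
    then have k: "k < D" by simp
    show "B x (flip y k) = 0"
      by (rule far_zero[OF assms(1,2)]) (use assms k c[of k] dset_flip[OF assms(2,3) k] in simp_all)
  qed
  show "(\<Sum>k<D. B (flip x k) y) = 0"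
  proof (rule sum.neutral, rule ballI)
    fix k assume "k \<in> {..<D}"
    then have k: "k < D" by simp
    show "B (flip x k) y = 0"
      by (rule far_zero[OF assms(1)]) (use assms k c[of k] dset_flip'[OF assms(2,3) k] in simp_all)
  qed
qed

definition Cnd :: "nat \<Rightarrow> hmat \<Rightarrow> bool" where
  "Cnd D B \<longleftrightarrow> supp D B
    \<and> (\<forall>x\<in>hcX D. \<forall>k<D. B (flip x k) (flip x k) = B x x)
    \<and> (\<forall>x\<in>hcX D. (\<Sum>k<D. B x (flip x k)) = (\<Sum>k<D. B (flip x k) x))
    \<and> (\<forall>x\<in>hcX D. \<forall>k<D. \<forall>l<D. k \<noteq> l \<longrightarrow>
         B x (flip x k) + B x (flip x l) = B (flip x l) (flip (flip x l) k) + B (flip x k) (flip (flip x k) l))"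

lemma A_like_Cnd: "A_like D B \<longleftrightarrow> Cnd D B"
proof
  assume a: "A_like D B"
  then have s: "supp D B" by (simp add: A_like_def supp_def)
  have eq: "hmult D B (hcA D) x y = hmult D (hcA D) B x y" for x y
    using a by (simp add: A_like_def)
  show "Cnd D B" unfolding Cnd_def
  proof (intro conjI ballI allI impI)
    show "supp D B" by (rule s)
  next
    fix x k assume x: "x \<in> hcX D" and k: "k < D"
    show "B (flip x k) (flip x k) = B x x"
      using eq[of x "flip x k"] LR1[OF s x k] x by (simp add: hmult_right_A hmult_left_A)
  next
    fix x assume x: "x \<in> hcX D"
    show "(\<Sum>k<D. B x (flip x k)) = (\<Sum>k<D. B (flip x k) x)"
      using eq[of x x] x by (simp add: hmult_right_A hmult_left_A)
  next
    fix x k l assume x: "x \<in> hcX D" and k: "k < D" and l: "l < D" and kl: "k \<noteq> l"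
    show "B x (flip x k) + B x (flip x l) = B (flip x l) (flip (flip x l) k) + B (flip x k) (flip (flip x k) l)"
      using eq[of x "flip (flip x k) l"] LR2[OF s x k l kl] x by (simp add: hmult_right_A hmult_left_A)
  qed
next
  assume c: "Cnd D B"
  then have s: "supp D B" by (simp add: Cnd_def)
  have "hmult D B (hcA D) x y = hmult D (hcA D) B x y" for x y
  proof (cases "x \<in> hcX D \<and> y \<in> hcX D")
    case False
    then show ?thesis using s by (auto simp: hmult_right_A hmult_left_A supp_def is_hmat_def)
  next
    case True
    then have x: "x \<in> hcX D" and y: "y \<in> hcX D" by auto
    have f: "finite (dset D x y)" by (rule finite_subset[OF dset_sub]) simp
    consider "card (dset D x y) = 0" | "card (dset D x y) = 1" | "card (dset D x y) = 2" | "card (dset D x y) \<ge> 3"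
      by linarith
    then show ?thesis
    proof cases
      case 1
      then have "y = x" using f dset_empty[OF x y] by auto
      then show ?thesis using c x by (simp add: hmult_right_A hmult_left_A Cnd_def)
    next
      case 2
      then obtain m where m: "dset D x y = {m}" by (auto simp: card_1_singleton_iff)
      then have "m < D" using dset_sub by blast
      moreover have "y = flip x m" using dset_single[OF x y m] .
      ultimately show ?thesis using c x LR1[OF s x, of m] by (simp add: hmult_right_A hmult_left_A Cnd_def)
    next
      case 3
      then obtain m n where mn: "dset D x y = {m,n}" "m \<noteq> n" by (auto simp: card_2_iff)
      then have "m < D" "n < D" using dset_sub by blast+
      moreover have "y = flip (flip x m) n" using dset_double[OF x y mn] .
      ultimately show ?thesis using c x LR2[OF s x, of m n] mn(2)
        by (simp add: hmult_right_A hmult_left_A Cnd_def add.commute)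
    next
      case 4
      then show ?thesis using LR3[OF s x y] x y by (simp add: hmult_right_A hmult_left_A)
    qed
  qed
  then show "A_like D B" using s by (simp add: A_like_def supp_def fun_eq_iff)
qed

lemma hmult_add_left: "hmult D (B + C) E = hmult D B E + hmult D C E"
  by (simp add: hmult_def fun_eq_iff sum.distrib distrib_right)
lemma hmult_add_right: "hmult D E (B + C) = hmult D E B + hmult D E C"
  by (simp add: hmult_def fun_eq_iff sum.distrib distrib_left)
lemma hmult_scale_left: "hmult D (hscale c B) E = hscale c (hmult D B E)"
  by (simp add: hmult_def hscale_def fun_eq_iff sum_distrib_left mult.assoc)
lemma hmult_scale_right: "hmult D E (hscale c B) = hscale c (hmult D E B)"
  by (simp add: hmult_def hscale_def fun_eq_iff sum_distrib_left mult.left_commute)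
lemma hmult_zero_left: "hmult D 0 E = 0" by (simp add: hmult_def fun_eq_iff)
lemma hmult_zero_right: "hmult D E 0 = 0" by (simp add: hmult_def fun_eq_iff)

lemma A_like_subspace: "hv.subspace {B. A_like D B}"
  unfolding hv.subspace_def
proof (intro conjI ballI allI)
  show "0 \<in> {B. A_like D B}"
    by (simp add: A_like_def is_hmat_def hmult_zero_left hmult_zero_right)
next
  fix B C assume "B \<in> {B. A_like D B}" "C \<in> {B. A_like D B}"
  then show "B + C \<in> {B. A_like D B}"
    unfolding A_like_def mem_Collect_eq is_hmat_def hmult_add_left hmult_add_right
    by simp
next
  fix c B assume "B \<in> {B. A_like D B}"
  then show "hscale c B \<in> {B. A_like D B}"
    unfolding A_like_def mem_Collect_eq is_hmat_def hmult_scale_left hmult_scale_right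
    by (simp add: hscale_def)
qed

definition zz :: "nat \<Rightarrow> bool list" where "zz D = replicate D False"
lemma zz_X[simp]: "zz D \<in> hcX D" by (simp add: zz_def hcX_def)

lemma flip_closure:
  assumes P0: "P (zz D)" and step: "\<And>x m. x \<in> hcX D \<Longrightarrow> m < D \<Longrightarrow> P x \<Longrightarrow> P (flip x m)"
  shows "x \<in> hcX D \<Longrightarrow> P x"
proof (induction "card {k. k < D \<and> x ! k}" arbitrary: x rule: less_induct)
  case (less x)
  show ?case
  proof (cases "{k. k < D \<and> x ! k} = {}")
    case True
    then have "x = zz D" using less.prems by (auto intro!: nth_equalityI simp: zz_def X_len)
    then show ?thesis using P0 by simp
  next
    case False
    then obtain m where m: "m < D" "x ! m" by auto
    let ?y = "flip x m"
    have y: "?y \<in> hcX D" using less.prems by simp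
    have "{k. k < D \<and> ?y ! k} = {k. k < D \<and> x ! k} - {m}"
      using less.prems m by (auto simp: flip_nth X_len split: if_splits)
    then have "card {k. k < D \<and> ?y ! k} < card {k. k < D \<and> x ! k}"
      using m card_Diff1_less[of "{k. k < D \<and> x ! k}" m] by simp
    then have "P ?y" using less.hyps y by blast
    then have "P (flip ?y m)" using step y m by blast
    then show ?thesis by simp
  qed
qed

lemma uniq:
  assumes c: "Cnd D B" and d0: "B (zz D) (zz D) = 0"
    and a0: "\<And>k. k < D \<Longrightarrow> B (zz D) (flip (zz D) k) + B (flip (zz D) k) (zz D) = 0"
    and b0: "\<And>k l. k < l \<Longrightarrow> l < D \<Longrightarrow> B (zz D) (flip (zz D) k) - B (flip (zz D) l) (flip (flip (zz D) l) k) = 0"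
  shows "B x y = 0"
proof -
  define z where "z = zz D"
  define h where "h k x = B x (flip x k)" for k x
  have s: "supp D B" using c by (simp add: Cnd_def)
  have bb: "h k x + h l x = h k (flip x l) + h l (flip x k)" if "x \<in> hcX D" "k < D" "l < D" "k \<noteq> l" for x k l
    using c that unfolding Cnd_def h_def by (metis add.commute)
  have S1: "h k (flip x l) = h k x" if kl: "k < D" "l < D" "k \<noteq> l" and x: "x \<in> hcX D" for k l x
  proof -
    define g where "g x = h k (flip x l) - h k x" for x
    have "g x = 0"
    proof (rule flip_closure[where P="\<lambda>x. g x = 0", OF _ _ x])
      show "g (zz D) = 0"
      proof (cases "k < l")
        case True then show ?thesis using b0[of k l] kl by (simp add: g_def h_def)
      next
        case False
        then have "l < k" using kl by simp
        then show ?thesis using b0[of l k] kl bb[of "zz D" k l] by (simp add: g_def h_def)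
      qed
    next
      fix x m assume x: "x \<in> hcX D" and m: "m < D" and gx: "g x = 0"
      have "g (flip x m) = g x \<or> g (flip x m) = - g x"
      proof -
        consider "m = l" | "m = k" | "m \<noteq> k" "m \<noteq> l" by blast
        then show ?thesis
        proof cases
          case 1 then show ?thesis by (simp add: g_def)
        next
          case 2
          have "h k (flip x k) + h l (flip x k) = h k (flip (flip x k) l) + h l x"
            using bb[of "flip x k" k l] x kl by simp
          moreover have "h k x + h l x = h k (flip x l) + h l (flip x k)" using bb[of x k l] x kl by simp
          ultimately show ?thesis using 2 by (simp add: g_def)
        next
          case 3
          have e1: "h k x + h l x = h k (flip x l) + h l (flip x k)" using bb[of x k l] x kl by simp
          have e2: "h k (flip x m) + h l (flip x m) = h k (flip (flip x m) l) + h l (flip (flip x m) k)"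
            using bb[of "flip x m" k l] x kl by simp
          have e3: "h l x + h m x = h l (flip x m) + h m (flip x l)" using bb[of x l m] x kl m 3 by simp
          have e4: "h l (flip x k) + h m (flip x k) = h l (flip (flip x m) k) + h m (flip (flip x l) k)"
            using bb[of "flip x k" l m] x kl m 3 by (simp add: flip_comm)
          have e5: "h k x + h m x = h k (flip x m) + h m (flip x k)" using bb[of x k m] x kl m 3 by simp
          have e6: "h k (flip x l) + h m (flip x l) = h k (flip (flip x m) l) + h m (flip (flip x l) k)"
            using bb[of "flip x l" k m] x kl m 3 by (simp add: flip_comm)
          from e1 e2 e3 e4 e5 e6 have "g (flip x m) = g x" unfolding g_def by linarith
          then show ?thesis by simp
        qed
      qed
      then show "g (flip x m) = 0" using gx by auto
    qed
    then show ?thesis by (simp add: g_def)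
  qed
  have S2: "h k (flip x k) = h k x" if k: "k < D" and x: "x \<in> hcX D" for k x
  proof -
    define e where "e k x = h k (flip x k) - h k x" for k x
    have se: "(\<Sum>k<D. e k x) = 0" if "x \<in> hcX D" for x
    proof -
      have "(\<Sum>k<D. h k x) = (\<Sum>k<D. h k (flip x k))"
        using c that by (simp add: Cnd_def h_def)
      then show ?thesis by (simp add: e_def sum_subtractf)
    qed
    have "(\<Sum>j<D. e j (flip x k)) = (\<Sum>j<D. e j x - (if j = k then 2 * e k x else 0))"
    proof (rule sum.cong)
      fix j assume j: "j \<in> {..<D}"
      show "e j (flip x k) = e j x - (if j = k then 2 * e k x else 0)"
      proof (cases "j = k")
        case True then show ?thesis by (simp add: e_def)
      next
        case False
        have "h j (flip (flip x j) k) = h j (flip x j)" using S1[of j k "flip x j"] j k False x by simp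
        moreover have "h j (flip x k) = h j x" using S1[of j k x] j k False x by simp
        ultimately show ?thesis using False by (simp add: e_def flip_comm[of x k j])
      qed
    qed simp
    then have "0 = (\<Sum>j<D. e j x) - 2 * e k x" using se[of "flip x k"] x k
      by (simp add: sum_subtractf)
    then have "e k x = 0" using se[OF x] by simp
    then show ?thesis by (simp add: e_def)
  qed
  have hz: "h k x = 0" if k: "k < D" and x: "x \<in> hcX D" for k x
  proof (rule flip_closure[where P="\<lambda>x. h k x = 0", OF _ _ x])
    have "h k (zz D) + h k (flip (zz D) k) = 0" using a0[OF k] by (simp add: h_def)
    then show "h k (zz D) = 0" using S2[OF k zz_X] by simp
  next
    fix x m assume "x \<in> hcX D" "m < D" "h k x = 0"
    then show "h k (flip x m) = 0" using S1[of k m x] S2[of k x] k by (cases "m = k") auto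
  qed
  have dz: "B x x = 0" if x: "x \<in> hcX D" for x
  proof (rule flip_closure[where P="\<lambda>x. B x x = 0", OF d0 _ x])
    fix x m assume "x \<in> hcX D" "m < D" "B x x = 0"
    then show "B (flip x m) (flip x m) = 0" using c by (simp add: Cnd_def)
  qed
  show "B x y = 0"
  proof (cases "x \<in> hcX D \<and> y \<in> hcX D")
    case False then show ?thesis using s by (auto simp: supp_def is_hmat_def)
  next
    case True
    show ?thesis
    proof (cases "x = y \<or> hc_adj D x y")
      case False then show ?thesis using s True by (auto simp: supp_def)
    next
      case T2: True
      then show ?thesis
      proof
        assume "x = y" then show ?thesis using dz True by simp
      next
        assume "hc_adj D x y"
        then obtain k where "k < D" "y = flip x k" by (auto simp: adj_iff)
        then show ?thesis using hz True by (simp add: h_def)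
      qed
    qed
  qed
qed


definition sg :: "nat \<Rightarrow> bool list \<Rightarrow> real" where
  "sg i x = (if x ! (i - 1) then -1 else 1)"

definition Mm :: "nat \<Rightarrow> nat \<Rightarrow> nat \<Rightarrow> hmat" where
  "Mm D i j = hmult D (hmult D (alpha_star D i) (hcA D)) (alpha_star D j)
      - hmult D (hmult D (alpha_star D j) (hcA D)) (alpha_star D i)"

lemma hmult_S_left: "hmult D (alpha_star D i) C x y = (if x \<in> hcX D then sg i x * C x y else 0)"
proof (cases "x \<in> hcX D")
  case True
  have "hmult D (alpha_star D i) C x y = (\<Sum>z\<in>hcX D. (if z = x then sg i x * C x y else 0))"
    unfolding hmult_def by (rule sum.cong) (auto simp: alpha_star_def sg_def True)
  then show ?thesis using True finX by simp
next
  case False then show ?thesis by (simp add: hmult_def alpha_star_def)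
qed

lemma hmult_S_right: "hmult D C (alpha_star D j) x y = (if y \<in> hcX D then C x y * sg j y else 0)"
proof (cases "y \<in> hcX D")
  case True
  have "hmult D C (alpha_star D j) x y = (\<Sum>z\<in>hcX D. (if z = y then C x y * sg j y else 0))"
    unfolding hmult_def by (rule sum.cong) (auto simp: alpha_star_def sg_def True)
  then show ?thesis using True finX by simp
next
  case False then show ?thesis by (auto simp: hmult_def alpha_star_def intro!: sum.neutral)
qed

lemma Mm_val: "Mm D i j x y = (if x \<in> hcX D \<and> y \<in> hcX D then hcA D x y * (sg i x * sg j y - sg j x * sg i y) else 0)"
  by (simp add: Mm_def hmult_S_left hmult_S_right algebra_simps)

lemma A_flip: "x \<in> hcX D \<Longrightarrow> k < D \<Longrightarrow> hcA D x (flip x k) = 1"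
  by (auto simp: hcA_def adj_iff)
lemma A_diag: "hcA D x x = 0"
  using adj_iff[of D x x] by (auto simp: hcA_def X_len)

lemma sg_flip: "k < length x \<Longrightarrow> sg i (flip x k) = (if k = i - 1 then - sg i x else sg i x)"
  by (auto simp: sg_def flip_def nth_list_update)

lemma sg_zz: "i - 1 < D \<Longrightarrow> sg i (zz D) = 1"
  by (simp add: sg_def zz_def)

lemma I_diag: "x \<in> hcX D \<Longrightarrow> hcI D x x = 1" by (simp add: hcI_def)
lemma I_off: "x \<in> hcX D \<Longrightarrow> k < D \<Longrightarrow> hcI D x (flip x k) = 0" by (simp add: hcI_def X_len)
lemma al_diag: "alpha D i x x = 0" by (simp add: alpha_def)
lemma al_off: "x \<in> hcX D \<Longrightarrow> k < D \<Longrightarrow> 1 \<le> i \<Longrightarrow> i \<le> D \<Longrightarrow>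
   alpha D i x (flip x k) = (if k = i - 1 then 1 else 0)"
  by (auto simp: alpha_def flip_nth X_len)
lemma M_diag: "Mm D i j x x = 0" by (simp add: Mm_val A_diag)
lemma M_off: "x \<in> hcX D \<Longrightarrow> k < D \<Longrightarrow> i - 1 \<noteq> j - 1 \<Longrightarrow>
   Mm D i j x (flip x k) = (if k = i - 1 then 2 * (sg i x * sg j x) else 0)
      - (if k = j - 1 then 2 * (sg i x * sg j x) else 0)"
  by (auto simp: Mm_val A_flip sg_flip X_len)

lemma al_back: "x \<in> hcX D \<Longrightarrow> k < D \<Longrightarrow> 1 \<le> i \<Longrightarrow> i \<le> D \<Longrightarrow>
   alpha D i (flip x k) x = (if k = i - 1 then 1 else 0)"
  using al_off[of "flip x k" D k i] by simp
lemma M_back: "x \<in> hcX D \<Longrightarrow> k < D \<Longrightarrow> i - 1 \<noteq> j - 1 \<Longrightarrow>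
   Mm D i j (flip x k) x = (if k = i - 1 then 2 * (sg i (flip x k) * sg j (flip x k)) else 0)
      - (if k = j - 1 then 2 * (sg i (flip x k) * sg j (flip x k)) else 0)"
  using M_off[of "flip x k" D k i j] by simp

lemma supp_I: "supp D (hcI D)"
  by (auto simp: supp_def is_hmat_def hcI_def)

lemma supp_al: assumes "1 \<le> i" "i \<le> D" shows "supp D (alpha D i)"
  unfolding supp_def
proof (intro conjI ballI impI)
  show "is_hmat D (alpha D i)" by (auto simp: is_hmat_def alpha_def)
  fix x y assume x: "x \<in> hcX D" and y: "y \<in> hcX D" and n: "x \<noteq> y \<and> \<not> hc_adj D x y"
  show "alpha D i x y = 0"
  proof (rule ccontr)
    assume "alpha D i x y \<noteq> 0"
    then have c: "x ! (i - 1) \<noteq> y ! (i - 1)" "\<forall>k<D. k \<noteq> i - 1 \<longrightarrow> x ! k = y ! k"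
      by (auto simp: alpha_def split: if_splits)
    have "y = flip x (i - 1)"
      by (rule nth_equalityI) (use x y c assms in \<open>auto simp: X_len flip_nth\<close>)
    then have "hc_adj D x y" using x assms by (auto simp: adj_iff intro!: exI[of _ "i - 1"])
    then show False using n by simp
  qed
qed

lemma supp_M: "supp D (Mm D i j)"
  by (auto simp: supp_def is_hmat_def Mm_val hcA_def)

lemma Cnd_I: "Cnd D (hcI D)"
  unfolding Cnd_def using supp_I
  by (simp add: I_off I_diag flip_flip[symmetric, of _ k for k] cong: sum.cong)
     (auto simp: hcI_def X_len)

lemma Cnd_al: assumes "1 \<le> i" "i \<le> D" shows "Cnd D (alpha D i)"
  unfolding Cnd_def using assms supp_al[OF assms]
  by (auto simp: al_off al_back al_diag)

lemma Cnd_M: assumes "1 \<le> i" "i < j" "j \<le> D" shows "Cnd D (Mm D i j)"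
  unfolding Cnd_def
proof (intro conjI ballI allI impI)
  have ij: "i - 1 \<noteq> j - 1" "i - 1 < D" "j - 1 < D" using assms by auto
  show "supp D (Mm D i j)" by (rule supp_M)
  fix x assume x: "x \<in> hcX D"
  then have lx: "length x = D" by (simp add: X_len)
  {
    fix k assume "k < D"
    then show "Mm D i j (flip x k) (flip x k) = Mm D i j x x" by (simp add: M_diag)
  next
    have "(\<Sum>k<D. Mm D i j x (flip x k)) = (\<Sum>k<D. (if k = i - 1 then 2 * (sg i x * sg j x) else 0)
      - (if k = j - 1 then 2 * (sg i x * sg j x) else 0))"
      by (rule sum.cong) (use x ij in \<open>simp_all add: M_off\<close>)
    then have "(\<Sum>k<D. Mm D i j x (flip x k)) = 0"
      using ij by (simp add: sum_subtractf)
    moreover have "(\<Sum>k<D. Mm D i j (flip x k) x) = (\<Sum>k<D. (if k = i - 1 then - 2 * (sg i x * sg j x) else 0)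
      - (if k = j - 1 then - 2 * (sg i x * sg j x) else 0))"
      by (rule sum.cong) (use x ij lx in \<open>auto simp: M_back sg_flip\<close>)
    then have "(\<Sum>k<D. Mm D i j (flip x k) x) = 0"
      using ij by (simp add: sum_subtractf)
    ultimately show "(\<Sum>k<D. Mm D i j x (flip x k)) = (\<Sum>k<D. Mm D i j (flip x k) x)" by simp
  next
    fix k l assume "k < D" "l < D" "k \<noteq> l"
    then show "Mm D i j x (flip x k) + Mm D i j x (flip x l) =
        Mm D i j (flip x l) (flip (flip x l) k) + Mm D i j (flip x k) (flip (flip x k) l)"
      using x ij lx by (simp add: M_off sg_flip)
  }
qed


definition PP :: "nat \<Rightarrow> (nat \<times> nat) set" where
  "PP D = {(0,0)} \<union> (\<lambda>i. (0,i)) ` {1..D} \<union> {(i,j). 1 \<le> i \<and> i < j \<and> j \<le> D}"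

definition bv :: "nat \<Rightarrow> nat \<times> nat \<Rightarrow> hmat" where
  "bv D p = (if fst p = 0 then (if snd p = 0 then hcI D else alpha D (snd p)) else Mm D (fst p) (snd p))"

definition hh :: "hmat \<Rightarrow> nat \<Rightarrow> bool list \<Rightarrow> real" where
  "hh B k x = B x (flip x k)"

definition phi :: "nat \<Rightarrow> nat \<times> nat \<Rightarrow> hmat \<Rightarrow> real" where
  "phi D p B = (if fst p = 0 then (if snd p = 0 then B (zz D) (zz D)
      else hh B (snd p - 1) (zz D) + hh B (snd p - 1) (flip (zz D) (snd p - 1)))
     else hh B (fst p - 1) (zz D) - hh B (fst p - 1) (flip (zz D) (snd p - 1)))"

definition cval :: "nat \<times> nat \<Rightarrow> real" where
  "cval p = (if fst p = 0 then (if snd p = 0 then 1 else 2) else 4)"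

lemma len_zz[simp]: "length (zz D) = D" by (simp add: zz_def)

lemma I_back: "x \<in> hcX D \<Longrightarrow> k < D \<Longrightarrow> hcI D (flip x k) x = 0" by (simp add: hcI_def X_len)

lemma t00: "phi D (0,0) (bv D (0,0)) = 1" by (simp add: phi_def bv_def I_diag)
lemma t0a: "phi D (0,0) (bv D (0,i)) = 0" if "1 \<le> i" using that by (simp add: phi_def bv_def al_diag)
lemma t0M: "phi D (0,0) (bv D (i,j)) = 0" if "1 \<le> i" using that by (simp add: phi_def bv_def M_diag)
lemma ta0: "phi D (0,i) (bv D (0,0)) = 0" if "1 \<le> i" "i \<le> D" using that
  by (simp add: phi_def bv_def hh_def I_off I_back)
lemma taa: "phi D (0,i) (bv D (0,i')) = (if i = i' then 2 else 0)" if "1 \<le> i" "i \<le> D" "1 \<le> i'" "i' \<le> D"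
  using that by (auto simp: phi_def bv_def hh_def al_off al_back)
lemma taM: "phi D (0,i) (bv D (i',j')) = 0" if "1 \<le> i" "i \<le> D" "1 \<le> i'" "i' < j'" "j' \<le> D"
  using that by (auto simp: phi_def bv_def hh_def M_off M_back sg_flip sg_zz)
lemma tM0: "phi D (i,j) (bv D (0,0)) = 0" if "1 \<le> i" "i < j" "j \<le> D"
  using that by (simp add: phi_def bv_def hh_def I_off)
lemma tMa: "phi D (i,j) (bv D (0,i')) = 0" if "1 \<le> i" "i < j" "j \<le> D" "1 \<le> i'" "i' \<le> D"
  using that by (simp add: phi_def bv_def hh_def al_off)
lemma tMM: "phi D (i,j) (bv D (i',j')) = (if i = i' \<and> j = j' then 4 else 0)"
  if "1 \<le> i" "i < j" "j \<le> D" "1 \<le> i'" "i' < j'" "j' \<le> D"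
  using that by (auto simp: phi_def bv_def hh_def M_off sg_flip sg_zz)

lemma table: assumes "p \<in> PP D" "q \<in> PP D"
  shows "phi D p (bv D q) = (if p = q then cval p else 0)"
  using assms unfolding PP_def
  by (auto simp: cval_def t00 t0a t0M ta0 taa taM tM0 tMa tMM split: if_splits)


lemma phi_add: "phi D p (B + C) = phi D p B + phi D p C"
  by (simp add: phi_def hh_def)
lemma phi_zero: "phi D p 0 = 0"
  by (simp add: phi_def hh_def)
lemma phi_diff: "phi D p (B - C) = phi D p B - phi D p C"
  by (simp add: phi_def hh_def)
lemma phi_scale: "phi D p (hscale c B) = c * phi D p B"
  by (simp add: phi_def hh_def hscale_def algebra_simps)
lemma phi_sum: "phi D p (sum g T) = (\<Sum>t\<in>T. phi D p (g t))"
  by (simp add: phi_def hh_def hsum_apply sum.distrib sum_subtractf)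

lemma card_pairs: "card {(i,j). 1 \<le> i \<and> i < j \<and> j \<le> (D::nat)} = D choose 2"
proof (induct D)
  case 0
  have e0: "{(i,j). 1 \<le> i \<and> i < j \<and> j \<le> (0::nat)} = {}" by auto
  have "card {(i,j). 1 \<le> i \<and> i < j \<and> j \<le> (0::nat)} = 0" unfolding e0 by simp
  then show ?case by simp
next
  case (Suc n)
  have e: "{(i,j). 1 \<le> i \<and> i < j \<and> j \<le> Suc n} = {(i,j). 1 \<le> i \<and> i < j \<and> j \<le> n} \<union> (\<lambda>i. (i, Suc n)) ` {1..n}"
    by auto
  have f: "finite {(i,j). 1 \<le> i \<and> i < j \<and> j \<le> (n::nat)}"
    by (rule finite_subset[of _ "{0..n} \<times> {0..n}"]) auto
  have "card {(i,j). 1 \<le> i \<and> i < j \<and> j \<le> Suc n} = (n choose 2) + card ((\<lambda>i. (i, Suc n)) ` {1..n})"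
    unfolding e using f Suc by (subst card_Un_disjoint) auto
  also have "card ((\<lambda>i. (i, Suc n)) ` {1..n}) = n" by (subst card_image) (auto simp: inj_on_def)
  also have "(n choose 2) + n = Suc n choose 2" by (simp add: numeral_2_eq_2)
  finally show ?case .
qed

lemma finPP: "finite (PP D)"
  unfolding PP_def by (rule finite_subset[of _ "{0..D} \<times> {0..D}"]) auto

lemma cardPP: "card (PP D) = 1 + D + (D choose 2)"
proof -
  have f: "finite {(i,j). 1 \<le> i \<and> i < j \<and> j \<le> (D::nat)}"
    by (rule finite_subset[of _ "{0..D} \<times> {0..D}"]) auto
  have c1: "card ((\<lambda>i. (0::nat, i)) ` {1..D}) = D" by (subst card_image) (auto simp: inj_on_def)
  have "card (PP D) = card ({(0,0)} \<union> (\<lambda>i. (0::nat, i)) ` {1..D}) + card {(i,j). 1 \<le> i \<and> i < j \<and> j \<le> (D::nat)}"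
    unfolding PP_def using f by (subst card_Un_disjoint) auto
  also have "card ({(0::nat,0::nat)} \<union> (\<lambda>i. (0::nat, i)) ` {1..D}) = 1 + D"
    using c1 by (subst card_Un_disjoint) auto
  finally show ?thesis using card_pairs[of D] by simp
qed

lemma cval_nz: "cval p \<noteq> 0" by (simp add: cval_def)

lemma bv_inj: "inj_on (bv D) (PP D)"
proof (rule inj_onI)
  fix p q assume p: "p \<in> PP D" and q: "q \<in> PP D" and e: "bv D p = bv D q"
  show "p = q"
  proof (rule ccontr)
    assume "p \<noteq> q"
    then have "phi D p (bv D q) = 0" using table[OF p q] by simp
    moreover have "phi D p (bv D p) = cval p" using table[OF p p] by simp
    ultimately show False using e cval_nz by simp
  qed
qed

lemma phi_gen: assumes "v \<in> bv D ` PP D" "p \<in> PP D"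
  shows "phi D p v = (if v = bv D p then cval p else 0)"
proof -
  obtain q where q: "q \<in> PP D" "v = bv D q" using assms by auto
  have "(p = q) = (bv D p = bv D q)" using bv_inj[of D] q assms(2) by (auto simp: inj_on_def)
  then show ?thesis using table[OF assms(2) q(1)] q by auto
qed

lemma hbasis_eq: "hbasis_set D = bv D ` PP D"
proof -
  have e1: "bv D ` ((\<lambda>i. (0,i)) ` {1..D}) = alpha D ` {1..D}"
    unfolding image_image by (rule image_cong) (auto simp: bv_def)
  have e2a: "bv D ` {(i,j). 1 \<le> i \<and> i < j \<and> j \<le> D} = (\<lambda>(i,j). Mm D i j) ` {(i,j). 1 \<le> i \<and> i < j \<and> j \<le> D}"
    by (rule image_cong) (auto simp: bv_def)
  have e2b: "(\<lambda>(i,j). Mm D i j) ` {(i,j). 1 \<le> i \<and> i < j \<and> j \<le> D} =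
     {hmult D (hmult D (alpha_star D i) (hcA D)) (alpha_star D j)
      - hmult D (hmult D (alpha_star D j) (hcA D)) (alpha_star D i) | i j. 1 \<le> i \<and> i < j \<and> j \<le> D}"
    unfolding Mm_def by (auto intro: image_eqI[where x="(i,j)" for i j])
  note e2 = e2a e2b
  have e0: "bv D ` {(0,0)} = {hcI D}" by (simp add: bv_def)
  show ?thesis unfolding hbasis_set_def PP_def image_Un e0 e1 e2 by simp
qed

lemma bv_Cnd: "q \<in> PP D \<Longrightarrow> Cnd D (bv D q)"
  unfolding PP_def by (auto simp: bv_def Cnd_I Cnd_al Cnd_M)


theorem corollary9p8:
  fixes D :: nat
  assumes "D \<ge> 1"
  shows "\<not> module.dependent hscale (hbasis_set D)
       \<and> module.span hscale (hbasis_set D) = {B. A_like D B}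
       \<and> card (hbasis_set D) = 1 + D + (D choose 2)
       \<and> vector_space.dim hscale {B. A_like D B} = 1 + D + (D choose 2)"
proof -
  let ?S = "bv D ` PP D"
  have indep: "\<not> hv.dependent ?S"
  proof
    assume "hv.dependent ?S"
    then obtain t u v0 where t: "finite t" "t \<subseteq> ?S" and s0: "(\<Sum>v\<in>t. hscale (u v) v) = 0"
      and v0: "v0 \<in> t" "u v0 \<noteq> 0"
      unfolding hv.dependent_explicit by blast
    obtain p0 where p0: "p0 \<in> PP D" "v0 = bv D p0" using v0 t by blast
    have "0 = phi D p0 (\<Sum>v\<in>t. hscale (u v) v)" using s0 by (simp add: phi_zero)
    also have "\<dots> = (\<Sum>v\<in>t. u v * phi D p0 v)" by (simp add: phi_sum phi_scale)
    also have "\<dots> = (\<Sum>v\<in>t. (if v = v0 then u v0 * cval p0 else 0))"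
    proof (rule sum.cong)
      fix v assume "v \<in> t"
      then have "v \<in> ?S" using t by blast
      then show "u v * phi D p0 v = (if v = v0 then u v0 * cval p0 else 0)"
        using phi_gen[of v D p0] p0 by auto
    qed simp
    also have "\<dots> = u v0 * cval p0" using t v0 by simp
    finally show False using v0 cval_nz by simp
  qed
  have sub: "hv.span ?S \<subseteq> {B. A_like D B}"
    by (rule hv.span_minimal) (use bv_Cnd A_like_Cnd A_like_subspace in auto)
  have sup: "B \<in> hv.span ?S" if B: "A_like D B" for B
  proof -
    define C0 where "C0 = (\<Sum>q\<in>PP D. hscale (phi D q B / cval q) (bv D q))"
    have C0s: "C0 \<in> hv.span ?S" unfolding C0_def
      by (intro hv.span_sum hv.span_scale hv.span_base) auto
    define B' where "B' = B - C0"
    have "A_like D B'" unfolding B'_def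
      using hv.subspace_diff[OF A_like_subspace[of D]] B C0s sub by auto
    then have cB': "Cnd D B'" by (simp add: A_like_Cnd)
    have ph: "phi D p B' = 0" if p: "p \<in> PP D" for p
    proof -
      have "phi D p C0 = (\<Sum>q\<in>PP D. (phi D q B / cval q) * (if p = q then cval p else 0))"
        unfolding C0_def phi_sum phi_scale
        by (rule sum.cong) (use p table in auto)
      also have "\<dots> = (\<Sum>q\<in>PP D. (if q = p then phi D p B else 0))"
        by (rule sum.cong) (use cval_nz in auto)
      also have "\<dots> = phi D p B" using p finPP[of D] by simp
      finally show ?thesis by (simp add: B'_def phi_diff)
    qed
    have "B' x y = 0" for x y
    proof (rule uniq[OF cB'])
      show "B' (zz D) (zz D) = 0" using ph[of "(0,0)"] by (simp add: PP_def phi_def)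
    next
      fix k assume k: "k < D"
      have "(0, Suc k) \<in> PP D" using k by (auto simp: PP_def)
      then show "B' (zz D) (flip (zz D) k) + B' (flip (zz D) k) (zz D) = 0"
        using ph[of "(0, Suc k)"] by (simp add: phi_def hh_def)
    next
      fix k l assume kl: "k < l" "l < D"
      have "(Suc k, Suc l) \<in> PP D" using kl by (auto simp: PP_def)
      then show "B' (zz D) (flip (zz D) k) - B' (flip (zz D) l) (flip (flip (zz D) l) k) = 0"
        using ph[of "(Suc k, Suc l)"] by (simp add: phi_def hh_def)
    qed
    then have "B = C0" unfolding B'_def by (simp add: fun_eq_iff)
    then show ?thesis using C0s by simp
  qed
  have span: "hv.span ?S = {B. A_like D B}" using sub sup by blast
  have card: "card ?S = 1 + D + (D choose 2)"
    using card_image[OF bv_inj[of D]] cardPP[of D] by simp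
  have dim: "hv.dim {B. A_like D B} = 1 + D + (D choose 2)"
    using hv.dim_span_eq_card_independent[OF indep] span card by simp
  show ?thesis using indep span card dim unfolding hbasis_eq by simp
qed

end
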